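(* Let $c_2,c_3,a_0,a_1,a_2,b_0,b_1$ be constants, $\mu(t)=t^2+c_2t+c_3$, $\phi=a_0\mu(t)^2+a_1\mu(t)+a_2$, $\psi=b_0\mu(t)+b_1$, $\lambda_n=n((n-1)a_0+b_0)$, and $\operatorname{L}_n=\phi\,\mathbb{D}^2+\psi\,\mathbb{S}\mathbb{D}-\lambda_n I$. Assume that for each $n\ge0$ there is a unique monic polynomial $P_n$ of degree $n$ in $\mu(t)$ with $\operatorname{L}_n(P_n)=0$, and write $P_n=\vartheta_n+p_{1,n}\vartheta_{n-1}+p_{2,n}\vartheta_{n-2}+\cdots$. Then for each $n\ge1$ there exists $\beta_n$ such that the polynomial $$U_n=\operatorname{L}_{n+1}\big((\mu(t)-\beta_n)P_n\big)$$ has degree $n-1$ in $\mu(t)$; moreover $$\beta_n=p_{1,n}+f_n+\frac{k_{1,n+1}}{\lambda_n-\lambda_{n+1}},$$ and $U_n=t_n\vartheta_{n-1}+(\text{lower terms in the basis }\vartheta_k)$ with $$t_n=k_{2,n+1}+(f_n+p_{1,n}-\beta_n)k_{1,n}+(p_{1,n}f_{n-1}+p_{2,n}-\beta_np_{1,n})(\lambda_{n-1}-\lambda_{n+1}).$$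
   Context: Operators: $\mathbb{D}f(t)=\frac{f(t+1/2)-f(t-1/2)}{\mu(t+1/2)-\mu(t-1/2)}$ and $\mathbb{S}f(t)=\frac{f(t+1/2)+f(t-1/2)}{2}$, acting on polynomials in $\mu(t)$ (degree lowered by one, resp. preserved). Basis: $\vartheta_n(t)=(-4)^{-n}(2t+1/2+c_2)_n(-2t+1/2-c_2)_n$ (Pochhammer symbols), $\vartheta_k=0$ for $k<0$; $\vartheta_n$ is monic of degree $n$ in $\mu(t)$ and satisfies $\mathbb{D}\vartheta_n=n\vartheta_{n-1}$, $\mu(t)\vartheta_n=\vartheta_{n+1}+f_n\vartheta_n$, $\mathbb{S}\vartheta_n=\vartheta_n+g_n\vartheta_{n-1}$, where $f_n=-\frac{c_2^2}{4}+\frac{(2n+1)^2}{16}+c_3$ and $g_n=\frac{n(2n-1)}{4}$. The constants $k_{1,j},k_{2,j}$ are $k_{1,j}=a_0j(j-1)(f_{j-1}+f_{j-2})+b_0jf_{j-1}+a_1j(j-1)+b_0jg_{j-1}+b_1j$, $k_{2,j}=a_0j(j-1)f_{j-2}^2+a_1j(j-1)f_{j-2}+b_0jg_{j-1}f_{j-2}+a_2j(j-1)+b_1jg_{j-1}$; they are such that $\operatorname{L}_n(\vartheta_j)=(a_0j(j-1)+b_0j-\lambda_n)\vartheta_j+k_{1,j}\vartheta_{j-1}+k_{2,j}\vartheta_{j-2}$. *)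

theory Defs
  imports "HOL-Computational_Algebra.Polynomial"
begin

text \<open>Everything is over the reals. Polynomials in mu(t) are represented as
  real polynomials in a formal variable standing for mu(t); the polynomial q
  represents the function t \<mapsto> poly q (mu t).\<close>

definition mu :: "real \<Rightarrow> real \<Rightarrow> real \<Rightarrow> real" where
  "mu c2 c3 t = t^2 + c2 * t + c3"

definition Dop :: "real \<Rightarrow> real \<Rightarrow> real poly \<Rightarrow> real poly" where
  "Dop c2 c3 p = (THE q. \<forall>t. mu c2 c3 (t + 1/2) \<noteq> mu c2 c3 (t - 1/2) \<longrightarrow>
     poly q (mu c2 c3 t) =
       (poly p (mu c2 c3 (t + 1/2)) - poly p (mu c2 c3 (t - 1/2))) /
       (mu c2 c3 (t + 1/2) - mu c2 c3 (t - 1/2)))"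

definition Sop :: "real \<Rightarrow> real \<Rightarrow> real poly \<Rightarrow> real poly" where
  "Sop c2 c3 p = (THE q. \<forall>t.
     poly q (mu c2 c3 t) = (poly p (mu c2 c3 (t + 1/2)) + poly p (mu c2 c3 (t - 1/2))) / 2)"

definition theta :: "real \<Rightarrow> real \<Rightarrow> nat \<Rightarrow> real poly" where
  "theta c2 c3 n = (THE q. \<forall>t. poly q (mu c2 c3 t) =
     inverse ((-4) ^ n) * pochhammer (2*t + 1/2 + c2) n * pochhammer (-2*t + 1/2 - c2) n)"

definition theta_coords :: "real \<Rightarrow> real \<Rightarrow> real poly \<Rightarrow> nat \<Rightarrow> real" where
  "theta_coords c2 c3 p = (THE c. (\<forall>k>degree p. c k = 0) \<and>
      p = (\<Sum>k\<le>degree p. smult (c k) (theta c2 c3 k)))"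

text \<open>Coordinate with integer index; coordinates at negative indices are 0
  (vartheta_k = 0 for k < 0).\<close>
definition pc :: "real \<Rightarrow> real \<Rightarrow> real poly \<Rightarrow> int \<Rightarrow> real" where
  "pc c2 c3 p k = (if k < 0 then 0 else theta_coords c2 c3 p (nat k))"

definition fcoef :: "real \<Rightarrow> real \<Rightarrow> int \<Rightarrow> real" where
  "fcoef c2 c3 n = - (c2^2) / 4 + (2 * of_int n + 1)^2 / 16 + c3"

definition gcoef :: "int \<Rightarrow> real" where
  "gcoef n = of_int n * (2 * of_int n - 1) / 4"

definition lam :: "real \<Rightarrow> real \<Rightarrow> int \<Rightarrow> real" where
  "lam a0 b0 n = of_int n * ((of_int n - 1) * a0 + b0)"

definition k1 :: "real \<Rightarrow> real \<Rightarrow> real \<Rightarrow> real \<Rightarrow> real \<Rightarrow> real \<Rightarrow> int \<Rightarrow> real" where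
  "k1 c2 c3 a0 a1 b0 b1 j =
     a0 * of_int j * (of_int j - 1) * (fcoef c2 c3 (j - 1) + fcoef c2 c3 (j - 2))
     + b0 * of_int j * fcoef c2 c3 (j - 1) + a1 * of_int j * (of_int j - 1)
     + b0 * of_int j * gcoef (j - 1) + b1 * of_int j"

definition k2 :: "real \<Rightarrow> real \<Rightarrow> real \<Rightarrow> real \<Rightarrow> real \<Rightarrow> real \<Rightarrow> real \<Rightarrow> int \<Rightarrow> real" where
  "k2 c2 c3 a0 a1 a2 b0 b1 j =
     a0 * of_int j * (of_int j - 1) * (fcoef c2 c3 (j - 2))^2
     + a1 * of_int j * (of_int j - 1) * fcoef c2 c3 (j - 2)
     + b0 * of_int j * gcoef (j - 1) * fcoef c2 c3 (j - 2)
     + a2 * of_int j * (of_int j - 1) + b1 * of_int j * gcoef (j - 1)"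

definition Lop :: "real \<Rightarrow> real \<Rightarrow> real \<Rightarrow> real \<Rightarrow> real \<Rightarrow> real \<Rightarrow> real \<Rightarrow> nat \<Rightarrow> real poly \<Rightarrow> real poly" where
  "Lop c2 c3 a0 a1 a2 b0 b1 n p =
     [:a2, a1, a0:] * Dop c2 c3 (Dop c2 c3 p)
     + [:b1, b0:] * Sop c2 c3 (Dop c2 c3 p)
     - smult (lam a0 b0 (int n)) p"

end

theory Submission
  imports Defs
begin


definition Fq :: "nat \<Rightarrow> real \<Rightarrow> real" where
  "Fq n s = (\<Prod>k<n. s^2/4 - (2*real k+1)^2/16)"

lemma Fq_Suc: "Fq (Suc n) s = Fq n s * (s^2/4 - (2*real n+1)^2/16)"
  by (simp add: Fq_def)

lemma Fq_id: "Fq (Suc n) (s+1) - Fq (Suc n) (s-1) = (real n+1) * s * Fq n s \<and>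
  Fq (Suc n) (s+1) + Fq (Suc n) (s-1) = 2 * Fq (Suc n) s + (real n+1)*(2*real n+1)/2 * Fq n s"
proof (induction n)
  case 0
  show ?case unfolding Fq_def by (simp add: power2_eq_square) (simp add: field_simps)
next
  case (Suc n)
  have p: "Fq (Suc n) (s+1) = Fq (Suc n) s + (real n+1)*(2*real n+1)/4 * Fq n s + (real n+1)*s/2 * Fq n s"
    using Suc.IH by (simp add: field_simps) 
  have m: "Fq (Suc n) (s-1) = Fq (Suc n) s + (real n+1)*(2*real n+1)/4 * Fq n s - (real n+1)*s/2 * Fq n s"
    using Suc.IH by (simp add: field_simps)
  show ?case
    apply (simp only: Fq_Suc[of "Suc n"] p m)
    apply (simp only: Fq_Suc[of n])
    apply (simp add: field_simps power2_eq_square)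
    done
qed



definition th :: "real \<Rightarrow> real \<Rightarrow> nat \<Rightarrow> real poly" where
  "th c2 c3 n = (\<Prod>k<n. [:- fcoef c2 c3 (int k), 1:])"

lemma mu_shift: "mu c2 c3 (t + 1/2) - mu c2 c3 (t - 1/2) = 2*t + c2"
  by (simp add: mu_def power2_eq_square algebra_simps)

lemma poly_th: "poly (th c2 c3 n) (mu c2 c3 t) = Fq n (2*t+c2)"
  unfolding th_def Fq_def poly_prod
  by (rule prod.cong) (auto simp: mu_def fcoef_def power2_eq_square field_simps)

lemma poly_th_p: "poly (th c2 c3 n) (mu c2 c3 (t+1/2)) = Fq n (2*t+c2+1)"
  by (simp add: poly_th algebra_simps)
lemma poly_th_m: "poly (th c2 c3 n) (mu c2 c3 (t-1/2)) = Fq n (2*t+c2-1)"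
  by (simp add: poly_th algebra_simps)

lemma poly_unique:
  assumes "\<forall>t. 2*t+c2 \<noteq> 0 \<longrightarrow> poly p (mu c2 c3 t) = poly q (mu c2 c3 t)"
  shows "p = q"
proof (rule ccontr)
  assume ne: "p \<noteq> q"
  define r where "r = p - q"
  have "r \<noteq> 0" using ne by (simp add: r_def)
  hence fin: "finite {x. poly r x = 0}" by (rule poly_roots_finite)
  define g where "g = (\<lambda>m::nat. mu c2 c3 ((real m + 1 - c2)/2))"
  have gv: "g m = (real m + 1)^2/4 + c3 - c2^2/4" for m
    by (simp add: g_def mu_def power2_eq_square field_simps)
  have "inj g"
  proof
    fix x y assume "g x = g y"
    hence "(real x + 1)^2 = (real y + 1)^2" by (simp add: gv)
    hence "real x + 1 = real y + 1" by (simp add: power2_eq_iff)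
    thus "x = y" by simp
  qed
  hence inf: "infinite (range g)" using finite_imageD by blast
  have "range g \<subseteq> {x. poly r x = 0}"
  proof
    fix x assume "x \<in> range g"
    then obtain m where x: "x = g m" by auto
    have "2 * ((real m + 1 - c2)/2) + c2 = real m + 1" by (simp add: field_simps)
    hence "2 * ((real m + 1 - c2)/2) + c2 \<noteq> 0" by simp
    with assms have "poly p (g m) = poly q (g m)" unfolding g_def by blast
    thus "x \<in> {x. poly r x = 0}" by (simp add: x r_def)
  qed
  with fin inf show False using finite_subset by blast
qed

lemma theta_poch: "poly (th c2 c3 n) (mu c2 c3 t) =
     inverse ((-4) ^ n) * pochhammer (2*t + 1/2 + c2) n * pochhammer (-2*t + 1/2 - c2) n"
proof -
  have i4: "inverse (-4::real) ^ n = inverse ((-4::real) ^ n)" by (rule power_inverse)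
  have "(\<Prod>k<n. inverse (-4::real) * ((2*t + 1/2 + c2 + real k) * (-2*t + 1/2 - c2 + real k)))
     = inverse (-4) ^ n * ((\<Prod>k<n. (2*t + 1/2 + c2 + real k)) * (\<Prod>k<n. (-2*t + 1/2 - c2 + real k)))"
    by (simp only: prod.distrib prod_constant card_lessThan)
  also have "\<dots> = inverse ((-4::real) ^ n) * pochhammer (2*t + 1/2 + c2) n * pochhammer (-2*t + 1/2 - c2) n"
    using i4 by (simp add: pochhammer_prod atLeast0LessThan mult.assoc)
  finally have e: "inverse ((-4::real) ^ n) * pochhammer (2*t + 1/2 + c2) n * pochhammer (-2*t + 1/2 - c2) n
     = (\<Prod>k<n. inverse (-4::real) * ((2*t + 1/2 + c2 + real k) * (-2*t + 1/2 - c2 + real k)))" by simp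
  have "(\<Prod>k<n. inverse (-4::real) * ((2*t + 1/2 + c2 + real k) * (-2*t + 1/2 - c2 + real k))) = Fq n (2*t+c2)"
    unfolding Fq_def by (rule prod.cong) (auto simp: power2_eq_square field_simps)
  with e show ?thesis by (simp add: poly_th)
qed

lemma theta_th: "theta c2 c3 n = th c2 c3 n"
  unfolding theta_def
proof (rule the_equality)
  show "\<forall>t. poly (th c2 c3 n) (mu c2 c3 t) =
     inverse ((-4) ^ n) * pochhammer (2*t + 1/2 + c2) n * pochhammer (-2*t + 1/2 - c2) n"
    using theta_poch by blast
next
  fix q assume "\<forall>t. poly q (mu c2 c3 t) =
     inverse ((-4) ^ n) * pochhammer (2*t + 1/2 + c2) n * pochhammer (-2*t + 1/2 - c2) n"
  then show "q = th c2 c3 n" by (intro poly_unique[of c2 _ c3]) (auto simp: theta_poch)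
qed



definition isD where "isD c2 c3 p q \<longleftrightarrow> (\<forall>t. 2*t+c2 \<noteq> 0 \<longrightarrow>
   poly q (mu c2 c3 t) * (2*t+c2) = poly p (mu c2 c3 (t+1/2)) - poly p (mu c2 c3 (t-1/2)))"

definition isS where "isS c2 c3 p q \<longleftrightarrow> (\<forall>t.
   poly q (mu c2 c3 t) = (poly p (mu c2 c3 (t+1/2)) + poly p (mu c2 c3 (t-1/2))) / 2)"

lemma Dop_eq: assumes "isD c2 c3 p q" shows "Dop c2 c3 p = q"
  unfolding Dop_def
proof (rule the_equality)
  show "\<forall>t. mu c2 c3 (t + 1/2) \<noteq> mu c2 c3 (t - 1/2) \<longrightarrow>
     poly q (mu c2 c3 t) = (poly p (mu c2 c3 (t + 1/2)) - poly p (mu c2 c3 (t - 1/2))) /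
       (mu c2 c3 (t + 1/2) - mu c2 c3 (t - 1/2))"
  proof (intro allI impI)
    fix t assume "mu c2 c3 (t + 1/2) \<noteq> mu c2 c3 (t - 1/2)"
    hence ne: "2*t+c2 \<noteq> 0" using mu_shift[of c2 c3 t] by simp
    with assms have "poly q (mu c2 c3 t) * (2*t+c2) = poly p (mu c2 c3 (t+1/2)) - poly p (mu c2 c3 (t-1/2))"
      unfolding isD_def by blast
    with ne show "poly q (mu c2 c3 t) = (poly p (mu c2 c3 (t + 1/2)) - poly p (mu c2 c3 (t - 1/2))) /
       (mu c2 c3 (t + 1/2) - mu c2 c3 (t - 1/2))" unfolding mu_shift by (simp add: field_simps)
  qed
next
  fix q' assume H: "\<forall>t. mu c2 c3 (t + 1/2) \<noteq> mu c2 c3 (t - 1/2) \<longrightarrow>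
     poly q' (mu c2 c3 t) = (poly p (mu c2 c3 (t + 1/2)) - poly p (mu c2 c3 (t - 1/2))) /
       (mu c2 c3 (t + 1/2) - mu c2 c3 (t - 1/2))"
  show "q' = q"
  proof (rule poly_unique[of c2 _ c3], intro allI impI)
    fix t assume ne: "2*t+c2 \<noteq> 0"
    hence "mu c2 c3 (t + 1/2) \<noteq> mu c2 c3 (t - 1/2)" using mu_shift[of c2 c3 t] by simp
    with H have a: "poly q' (mu c2 c3 t) = (poly p (mu c2 c3 (t + 1/2)) - poly p (mu c2 c3 (t - 1/2))) /
       (2*t+c2)" by (simp add: mu_shift)
    from assms ne have "poly q (mu c2 c3 t) * (2*t+c2) = poly p (mu c2 c3 (t+1/2)) - poly p (mu c2 c3 (t-1/2))"
      unfolding isD_def by blast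
    moreover have "poly q' (mu c2 c3 t) * (2*t+c2) = poly p (mu c2 c3 (t+1/2)) - poly p (mu c2 c3 (t-1/2))"
      using a ne by simp
    ultimately show "poly q' (mu c2 c3 t) = poly q (mu c2 c3 t)" using ne by (metis mult_right_cancel)
  qed
qed

lemma Sop_eq: assumes "isS c2 c3 p q" shows "Sop c2 c3 p = q"
  unfolding Sop_def
proof (rule the_equality)
  show "\<forall>t. poly q (mu c2 c3 t) = (poly p (mu c2 c3 (t + 1/2)) + poly p (mu c2 c3 (t - 1/2))) / 2"
    using assms unfolding isS_def by blast
next
  fix q' assume "\<forall>t. poly q' (mu c2 c3 t) = (poly p (mu c2 c3 (t + 1/2)) + poly p (mu c2 c3 (t - 1/2))) / 2"
  then have "\<forall>t. poly q' (mu c2 c3 t) = poly q (mu c2 c3 t)" using assms unfolding isS_def by metis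
  then show "q' = q" by (intro poly_unique[of c2 _ c3]) auto
qed

lemma isD_sum: assumes "finite A" "\<forall>k\<in>A. isD c2 c3 (p k) (q k)"
  shows "isD c2 c3 (\<Sum>k\<in>A. smult (a k) (p k)) (\<Sum>k\<in>A. smult (a k) (q k))"
  unfolding isD_def
proof (intro allI impI)
  fix t assume ne: "2*t+c2 \<noteq> 0"
  have "poly (\<Sum>k\<in>A. smult (a k) (q k)) (mu c2 c3 t) * (2*t+c2)
     = (\<Sum>k\<in>A. a k * (poly (q k) (mu c2 c3 t) * (2*t+c2)))"
    by (simp add: poly_sum sum_distrib_right mult.assoc)
  also have "\<dots> = (\<Sum>k\<in>A. a k * (poly (p k) (mu c2 c3 (t+1/2)) - poly (p k) (mu c2 c3 (t-1/2))))"
    using assms(2) ne unfolding isD_def by (intro sum.cong) auto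
  also have "\<dots> = poly (\<Sum>k\<in>A. smult (a k) (p k)) (mu c2 c3 (t+1/2)) - poly (\<Sum>k\<in>A. smult (a k) (p k)) (mu c2 c3 (t-1/2))"
    by (simp add: poly_sum right_diff_distrib sum_subtractf)
  finally show "poly (\<Sum>k\<in>A. smult (a k) (q k)) (mu c2 c3 t) * (2*t+c2) =
     poly (\<Sum>k\<in>A. smult (a k) (p k)) (mu c2 c3 (t+1/2)) - poly (\<Sum>k\<in>A. smult (a k) (p k)) (mu c2 c3 (t-1/2))" .
qed

lemma isS_sum: assumes "finite A" "\<forall>k\<in>A. isS c2 c3 (p k) (q k)"
  shows "isS c2 c3 (\<Sum>k\<in>A. smult (a k) (p k)) (\<Sum>k\<in>A. smult (a k) (q k))"
  unfolding isS_def
proof (intro allI)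
  fix t
  have "poly (\<Sum>k\<in>A. smult (a k) (q k)) (mu c2 c3 t)
     = (\<Sum>k\<in>A. a k * poly (q k) (mu c2 c3 t))"
    by (simp add: poly_sum)
  also have "\<dots> = (\<Sum>k\<in>A. a k * ((poly (p k) (mu c2 c3 (t+1/2)) + poly (p k) (mu c2 c3 (t-1/2))) / 2))"
    using assms(2) unfolding isS_def by (intro sum.cong) auto
  also have "\<dots> = (poly (\<Sum>k\<in>A. smult (a k) (p k)) (mu c2 c3 (t+1/2)) + poly (\<Sum>k\<in>A. smult (a k) (p k)) (mu c2 c3 (t-1/2))) / 2"
    by (simp add: poly_sum distrib_left sum.distrib flip: sum_divide_distrib)
  finally show "poly (\<Sum>k\<in>A. smult (a k) (q k)) (mu c2 c3 t) =
     (poly (\<Sum>k\<in>A. smult (a k) (p k)) (mu c2 c3 (t+1/2)) + poly (\<Sum>k\<in>A. smult (a k) (p k)) (mu c2 c3 (t-1/2))) / 2" .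
qed

lemma isD_th: "isD c2 c3 (th c2 c3 j) (smult (real j) (th c2 c3 (j-1)))"
proof (cases j)
  case 0
  then show ?thesis by (simp add: isD_def th_def)
next
  case (Suc n)
  show ?thesis unfolding isD_def
  proof (intro allI impI)
    fix t
    have "Fq (Suc n) (2*t+c2+1) - Fq (Suc n) (2*t+c2-1) = (real n+1) * (2*t+c2) * Fq n (2*t+c2)"
      using Fq_id[of n "2*t+c2"] by simp
    thus "poly (smult (real j) (th c2 c3 (j - 1))) (mu c2 c3 t) * (2 * t + c2) =
         poly (th c2 c3 j) (mu c2 c3 (t + 1 / 2)) - poly (th c2 c3 j) (mu c2 c3 (t - 1 / 2))"
      by (simp add: Suc poly_th_p poly_th_m poly_th algebra_simps)
  qed
qed

lemma isS_th: "isS c2 c3 (th c2 c3 j) (th c2 c3 j + smult (gcoef (int j)) (th c2 c3 (j-1)))"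
proof (cases j)
  case 0
  then show ?thesis by (simp add: isS_def th_def gcoef_def)
next
  case (Suc n)
  show ?thesis unfolding isS_def
  proof (intro allI)
    fix t
    have "Fq (Suc n) (2*t+c2+1) + Fq (Suc n) (2*t+c2-1) = 2 * Fq (Suc n) (2*t+c2) + (real n+1)*(2*real n+1)/2 * Fq n (2*t+c2)"
      using Fq_id[of n "2*t+c2"] by simp
    thus "poly (th c2 c3 j + smult (gcoef (int j)) (th c2 c3 (j - 1))) (mu c2 c3 t) =
         (poly (th c2 c3 j) (mu c2 c3 (t + 1 / 2)) + poly (th c2 c3 j) (mu c2 c3 (t - 1 / 2))) / 2"
      unfolding Suc poly_add poly_smult poly_th_p poly_th_m by (simp add: poly_th gcoef_def field_simps)
  qed
qed

lemma Dop_lin: "finite A \<Longrightarrow> Dop c2 c3 (\<Sum>k\<in>A. smult (a k) (th c2 c3 (h k)))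
   = (\<Sum>k\<in>A. smult (a k) (smult (real (h k)) (th c2 c3 (h k - 1))))"
  apply (rule Dop_eq, rule isD_sum, assumption) using isD_th by blast

lemma Sop_lin: "finite A \<Longrightarrow> Sop c2 c3 (\<Sum>k\<in>A. smult (a k) (th c2 c3 (h k)))
   = (\<Sum>k\<in>A. smult (a k) (th c2 c3 (h k) + smult (gcoef (int (h k))) (th c2 c3 (h k - 1))))"
  apply (rule Sop_eq, rule isS_sum, assumption) using isS_th by blast

lemma Dop_th: "Dop c2 c3 (th c2 c3 j) = smult (real j) (th c2 c3 (j-1))"
  by (rule Dop_eq) (rule isD_th)
lemma Sop_th: "Sop c2 c3 (th c2 c3 j) = th c2 c3 j + smult (gcoef (int j)) (th c2 c3 (j-1))"
  by (rule Sop_eq) (rule isS_th)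




lemma th_0[simp]: "th c2 c3 0 = 1" by (simp add: th_def)
lemma th_Suc: "th c2 c3 (Suc n) = th c2 c3 n * [:- fcoef c2 c3 (int n), 1:]"
  by (simp add: th_def lessThan_Suc mult.commute)

lemma th_monic: "degree (th c2 c3 n) = n \<and> coeff (th c2 c3 n) n = 1"
proof (induction n)
  case 0 then show ?case by simp
next
  case (Suc n)
  have ne: "th c2 c3 n \<noteq> 0" using Suc by auto
  have "degree (th c2 c3 n * [:- fcoef c2 c3 (int n), 1:]) = degree (th c2 c3 n) + degree [:- fcoef c2 c3 (int n), 1:]"
    by (rule degree_mult_eq) (use ne in auto)
  hence d: "degree (th c2 c3 (Suc n)) = Suc n" unfolding th_Suc using Suc by simp
  have L1: "lead_coeff [:- fcoef c2 c3 (int n), 1:] = 1" by simp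
  have L2: "lead_coeff (th c2 c3 n) = 1" using Suc by simp
  have "lead_coeff (th c2 c3 n * [:- fcoef c2 c3 (int n), 1:]) = 1"
    using lead_coeff_mult[of "th c2 c3 n" "[:- fcoef c2 c3 (int n), 1:]"] L1 L2 by (metis mult_1)
  hence "lead_coeff (th c2 c3 (Suc n)) = 1" by (simp only: th_Suc)
  with d show ?case by simp
qed

lemma th_deg[simp]: "degree (th c2 c3 n) = n" using th_monic by blast
lemma th_lead[simp]: "coeff (th c2 c3 n) n = 1" using th_monic by blast
lemma th_coeff_gt: "k < m \<Longrightarrow> coeff (th c2 c3 k) m = 0"
  by (simp add: coeff_eq_0)

lemma coeff_sum_top: "coeff (\<Sum>k\<le>N. smult (a k) (th c2 c3 k)) N = a N"
proof -
  have "coeff (\<Sum>k\<le>N. smult (a k) (th c2 c3 k)) N = (\<Sum>k\<le>N. a k * coeff (th c2 c3 k) N)"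
    by (simp add: coeff_sum)
  also have "\<dots> = (\<Sum>k\<le>N. if k = N then a k else 0)"
    by (intro sum.cong) (auto simp: th_coeff_gt)
  finally show ?thesis by simp
qed

lemma deg_sum_le: "degree (\<Sum>k\<le>N. smult (a k) (th c2 c3 k)) \<le> N"
  by (rule degree_sum_le) (auto intro: order.trans[OF degree_smult_le])

lemma sum_zero_imp:
  "(\<Sum>k\<le>N. smult (a k) (th c2 c3 k)) = 0 \<Longrightarrow> \<forall>k\<le>N. a k = 0"
proof (induction N)
  case 0 then show ?case by simp
next
  case (Suc N)
  have aN: "a (Suc N) = 0" using coeff_sum_top[of a c2 c3 "Suc N"] Suc.prems by (metis coeff_0)
  hence "(\<Sum>k\<le>N. smult (a k) (th c2 c3 k)) = 0" using Suc.prems by simp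
  with Suc.IH aN show ?case using le_Suc_eq by auto
qed

lemma ext_sum: assumes "\<forall>k>M. a k = 0" "M \<le> M'"
  shows "(\<Sum>k\<le>M'. smult (a k) (th c2 c3 k)) = (\<Sum>k\<le>M. smult (a k) (th c2 c3 k))"
  using assms by (intro sum.mono_neutral_right) auto

lemma ext_sum': assumes "\<forall>k>M. a k = 0" "\<forall>k>M'. a k = 0"
  shows "(\<Sum>k\<le>M'. smult (a k) (th c2 c3 k)) = (\<Sum>k\<le>M. smult (a k) (th c2 c3 k))"
proof (cases "M \<le> M'")
  case True then show ?thesis using ext_sum assms by blast
next
  case False then show ?thesis using ext_sum[of M' a M] assms by simp
qed

lemma tc_char: assumes p: "p = (\<Sum>k\<le>N. smult (a k) (th c2 c3 k))" and z: "\<forall>k>N. a k = 0"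
  shows "theta_coords c2 c3 p = a"
proof -
  have za: "\<forall>k>degree p. a k = 0"
  proof (rule ccontr)
    assume "\<not> (\<forall>k>degree p. a k = 0)"
    hence ne: "{k. degree p < k \<and> a k \<noteq> 0} \<noteq> {}" by auto
    have fin: "finite {k. degree p < k \<and> a k \<noteq> 0}"
    proof (rule finite_subset[of _ "{..N}"])
      show "{k. degree p < k \<and> a k \<noteq> 0} \<subseteq> {..N}"
      proof
        fix x assume "x \<in> {k. degree p < k \<and> a k \<noteq> 0}"
        hence "a x \<noteq> 0" by simp
        hence "\<not> N < x" using z by blast
        thus "x \<in> {..N}" by simp
      qed
    qed simp
    define m where "m = Max {k. degree p < k \<and> a k \<noteq> 0}"
    have m: "degree p < m" "a m \<noteq> 0" using Max_in[OF fin ne] m_def by auto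
    have zm: "\<forall>k>m. a k = 0"
    proof (intro allI impI, rule ccontr)
      fix k assume k: "m < k" "a k \<noteq> 0"
      hence "k \<in> {k. degree p < k \<and> a k \<noteq> 0}" using m(1) by auto
      hence "k \<le> m" using Max_ge[OF fin] m_def by blast
      with k show False by simp
    qed
    have "p = (\<Sum>k\<le>m. smult (a k) (th c2 c3 k))" using trans[OF p ext_sum'[OF zm z]] .
    hence "coeff p m = a m" by (simp add: coeff_sum_top)
    with m show False by (simp add: coeff_eq_0)
  qed
  have pd: "p = (\<Sum>k\<le>degree p. smult (a k) (th c2 c3 k))" using trans[OF p ext_sum'[OF za z]] .
  show ?thesis unfolding theta_coords_def theta_th
  proof (rule the_equality)
    show "(\<forall>k>degree p. a k = 0) \<and> p = (\<Sum>k\<le>degree p. smult (a k) (th c2 c3 k))" using za pd by blast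
  next
    fix c assume c: "(\<forall>k>degree p. c k = 0) \<and> p = (\<Sum>k\<le>degree p. smult (c k) (th c2 c3 k))"
    have "(\<Sum>k\<le>degree p. smult (c k - a k) (th c2 c3 k)) = 0"
      using c[THEN conjunct2, symmetric] pd[symmetric] by (simp add: smult_diff_left sum_subtractf)
    from sum_zero_imp[OF this] have "\<forall>k\<le>degree p. c k = a k" by simp
    note le = this
    show "c = a"
    proof (rule ext)
      fix k show "c k = a k" by (cases "k \<le> degree p") (use c za le in auto)
    qed
  qed
qed

lemma th_expand: "\<exists>a. (\<forall>k>degree p. a k = 0) \<and> p = (\<Sum>k\<le>degree p. smult (a k) (th c2 c3 k))"
proof (induction "degree p" arbitrary: p rule: less_induct)
  case less
  show ?case
  proof (cases "degree p = 0")
    case True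
    then obtain c where "p = [:c:]" by (metis degree_eq_zeroE)
    then show ?thesis using True by (intro exI[of _ "\<lambda>k. if k = 0 then c else 0"]) auto
  next
    case False
    define d where "d = degree p"
    define r where "r = p - smult (lead_coeff p) (th c2 c3 d)"
    have rd: "degree r \<le> d" unfolding r_def d_def by (intro degree_diff_le) auto
    have rc: "coeff r d = 0" unfolding r_def d_def by simp
    have rlt: "degree r < d"
    proof (rule ccontr)
      assume "\<not> degree r < d"
      hence "degree r = d" using rd by simp
      hence "r = 0" using rc by (metis leading_coeff_0_iff)
      thus False using \<open>degree r = d\<close> False d_def by simp
    qed
    have "degree r < degree p" using rlt d_def by simp
    from less(1)[OF this] obtain b where b: "\<forall>k>degree r. b k = 0" "r = (\<Sum>k\<le>degree r. smult (b k) (th c2 c3 k))"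
      by blast
    define a where "a = b(d := lead_coeff p)"
    have dpos: "d = Suc (d - 1)" using False d_def by simp
    have s1: "(\<Sum>k\<le>d-1. smult (a k) (th c2 c3 k)) = (\<Sum>k\<le>d-1. smult (b k) (th c2 c3 k))"
      by (rule sum.cong) (use False d_def in \<open>auto simp: a_def\<close>)
    have "(\<Sum>k\<le>d. smult (a k) (th c2 c3 k)) = (\<Sum>k\<le>d-1. smult (a k) (th c2 c3 k)) + smult (a d) (th c2 c3 d)"
      using sum.atMost_Suc[of "\<lambda>k. smult (a k) (th c2 c3 k)" "d-1"] unfolding dpos[symmetric] .
    hence "(\<Sum>k\<le>d. smult (a k) (th c2 c3 k)) = (\<Sum>k\<le>d-1. smult (b k) (th c2 c3 k)) + smult (lead_coeff p) (th c2 c3 d)"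
      using s1 by (simp add: a_def)
    also have "(\<Sum>k\<le>d-1. smult (b k) (th c2 c3 k)) = r"
    proof -
      have "(\<Sum>k\<le>d-1. smult (b k) (th c2 c3 k)) = (\<Sum>k\<le>degree r. smult (b k) (th c2 c3 k))"
        by (rule ext_sum[OF b(1)]) (use rlt in simp)
      also have "\<dots> = r" by (rule b(2)[symmetric])
      finally show ?thesis .
    qed
    finally have "p = (\<Sum>k\<le>d. smult (a k) (th c2 c3 k))" by (simp add: r_def)
    moreover have "\<forall>k>d. a k = 0" using b(1) rlt by (simp add: a_def)
    ultimately show ?thesis unfolding d_def by blast
  qed
qed

lemma smult_sum_r: "smult c (sum f A) = sum (\<lambda>i. smult c (f i)) A"
  by (induction A rule: infinite_finite_induct) (auto simp: smult_add_right)

abbreviation tc where "tc c2 c3 p \<equiv> theta_coords c2 c3 p"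

lemma tc_expand: "p = (\<Sum>k\<le>degree p. smult (tc c2 c3 p k) (th c2 c3 k))"
  and tc_zero: "k > degree p \<Longrightarrow> tc c2 c3 p k = 0"
proof -
  obtain a where a: "\<forall>k>degree p. a k = 0" "p = (\<Sum>k\<le>degree p. smult (a k) (th c2 c3 k))"
    using th_expand by blast
  have "tc c2 c3 p = a" using tc_char[OF a(2) a(1)] .
  thus "p = (\<Sum>k\<le>degree p. smult (tc c2 c3 p k) (th c2 c3 k))" "k > degree p \<Longrightarrow> tc c2 c3 p k = 0"
    using a(1) a(2)[symmetric] by auto
qed

lemma tc_zero': "\<forall>k>degree p. tc c2 c3 p k = 0" using tc_zero by blast

lemma tc_add: "tc c2 c3 (p + q) k = tc c2 c3 p k + tc c2 c3 q k"
proof -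
  define N where "N = max (degree p) (degree q)"
  have ep: "p = (\<Sum>k\<le>N. smult (tc c2 c3 p k) (th c2 c3 k))"
    by (rule trans[OF tc_expand[of p c2 c3] ext_sum[of "degree p" "tc c2 c3 p" N c2 c3, symmetric]]) (auto simp: N_def tc_zero)
  have eq: "q = (\<Sum>k\<le>N. smult (tc c2 c3 q k) (th c2 c3 k))"
    by (rule trans[OF tc_expand[of q c2 c3] ext_sum[of "degree q" "tc c2 c3 q" N c2 c3, symmetric]]) (auto simp: N_def tc_zero)
  have "p + q = (\<Sum>k\<le>N. smult (tc c2 c3 p k + tc c2 c3 q k) (th c2 c3 k))"
    by (simp add: smult_add_left sum.distrib ep[symmetric] eq[symmetric])
  moreover have "\<forall>k>N. tc c2 c3 p k + tc c2 c3 q k = 0" by (simp add: N_def tc_zero)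
  ultimately have "tc c2 c3 (p+q) = (\<lambda>k. tc c2 c3 p k + tc c2 c3 q k)" by (rule tc_char)
  thus ?thesis by simp
qed

lemma tc_smult: "tc c2 c3 (smult c p) k = c * tc c2 c3 p k"
proof -
  have "smult c p = (\<Sum>k\<le>degree p. smult (c * tc c2 c3 p k) (th c2 c3 k))"
    using arg_cong[OF tc_expand[of p c2 c3], of "smult c"] by (simp add: smult_sum_r)
  moreover have "\<forall>k>degree p. c * tc c2 c3 p k = 0" by (simp add: tc_zero)
  ultimately have "tc c2 c3 (smult c p) = (\<lambda>k. c * tc c2 c3 p k)" by (rule tc_char)
  thus ?thesis by simp
qed

lemma tc_th: "tc c2 c3 (th c2 c3 j) k = (if k = j then 1 else 0)"
proof -
  have "th c2 c3 j = (\<Sum>k\<le>j. smult (if k = j then 1 else 0) (th c2 c3 k))"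
  proof -
    have "(\<Sum>k\<le>j. smult (if k = j then 1 else 0) (th c2 c3 k)) = (\<Sum>k\<le>j. if k = j then th c2 c3 k else 0)"
      by (rule sum.cong) auto
    thus ?thesis by simp
  qed
  moreover have "\<forall>k>j. (if k = j then 1 else (0::real)) = 0" by simp
  ultimately have "tc c2 c3 (th c2 c3 j) = (\<lambda>k. if k = j then 1 else 0)" by (rule tc_char)
  thus ?thesis by simp
qed

lemma tc_0: "tc c2 c3 0 k = 0"
  using tc_smult[where c=0 and p=0] by simp

lemma tc_sum: "finite A \<Longrightarrow> tc c2 c3 (\<Sum>i\<in>A. f i) k = (\<Sum>i\<in>A. tc c2 c3 (f i) k)"
  by (induction A rule: finite_induct) (auto simp: tc_0 tc_add)

lemma coeff_top_tc: "coeff p (degree p) = tc c2 c3 p (degree p)"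
  using coeff_sum_top[of "tc c2 c3 p" c2 c3 "degree p"] arg_cong[OF tc_expand[of p c2 c3], of "\<lambda>x. coeff x (degree p)"] by simp




lemma isD_add: assumes "isD c2 c3 p q" "isD c2 c3 p' q'" shows "isD c2 c3 (p + p') (q + q')"
  unfolding isD_def
proof (intro allI impI)
  fix t assume ne: "2*t+c2 \<noteq> 0"
  note h1 = assms(1)[unfolded isD_def, rule_format, OF ne]
  note h2 = assms(2)[unfolded isD_def, rule_format, OF ne]
  show "poly (q + q') (mu c2 c3 t) * (2 * t + c2) =
         poly (p + p') (mu c2 c3 (t + 1 / 2)) - poly (p + p') (mu c2 c3 (t - 1 / 2))"
    using h1 h2 by (simp only: poly_add distrib_right)
qed
lemma isD_smult: assumes "isD c2 c3 p q" shows "isD c2 c3 (smult c p) (smult c q)"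
  unfolding isD_def
proof (intro allI impI)
  fix t assume ne: "2*t+c2 \<noteq> 0"
  note h1 = assms(1)[unfolded isD_def, rule_format, OF ne]
  show "poly (smult c q) (mu c2 c3 t) * (2 * t + c2) =
         poly (smult c p) (mu c2 c3 (t + 1 / 2)) - poly (smult c p) (mu c2 c3 (t - 1 / 2))"
    by (simp only: poly_smult mult.assoc h1 right_diff_distrib)
qed
lemma isS_add: "isS c2 c3 p q \<Longrightarrow> isS c2 c3 p' q' \<Longrightarrow> isS c2 c3 (p + p') (q + q')"
  unfolding isS_def by (auto simp: field_simps)
lemma isS_smult: "isS c2 c3 p q \<Longrightarrow> isS c2 c3 (smult c p) (smult c q)"
  unfolding isS_def by (auto simp: field_simps)

lemma isD_Dop: "isD c2 c3 p (Dop c2 c3 p)"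
proof -
  have "isD c2 c3 (\<Sum>k\<le>degree p. smult (tc c2 c3 p k) (th c2 c3 k))
      (\<Sum>k\<le>degree p. smult (tc c2 c3 p k) (smult (real k) (th c2 c3 (k-1))))"
    by (rule isD_sum) (simp, use isD_th in blast)
  hence "isD c2 c3 p (\<Sum>k\<le>degree p. smult (tc c2 c3 p k) (smult (real k) (th c2 c3 (k-1))))"
    using tc_expand[of p c2 c3] by metis
  thus ?thesis using Dop_eq by metis
qed

lemma isS_Sop: "isS c2 c3 p (Sop c2 c3 p)"
proof -
  have "isS c2 c3 (\<Sum>k\<le>degree p. smult (tc c2 c3 p k) (th c2 c3 k))
      (\<Sum>k\<le>degree p. smult (tc c2 c3 p k) (th c2 c3 k + smult (gcoef (int k)) (th c2 c3 (k-1))))"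
    by (rule isS_sum) (simp, use isS_th in blast)
  hence "isS c2 c3 p (\<Sum>k\<le>degree p. smult (tc c2 c3 p k) (th c2 c3 k + smult (gcoef (int k)) (th c2 c3 (k-1))))"
    using tc_expand[of p c2 c3] by metis
  thus ?thesis using Sop_eq by metis
qed

lemma Dop_add: "Dop c2 c3 (p + q) = Dop c2 c3 p + Dop c2 c3 q"
  by (rule Dop_eq, rule isD_add; rule isD_Dop)
lemma Dop_smult: "Dop c2 c3 (smult c p) = smult c (Dop c2 c3 p)"
  by (rule Dop_eq, rule isD_smult, rule isD_Dop)
lemma Sop_add: "Sop c2 c3 (p + q) = Sop c2 c3 p + Sop c2 c3 q"
  by (rule Sop_eq, rule isS_add; rule isS_Sop)
lemma Sop_smult: "Sop c2 c3 (smult c p) = smult c (Sop c2 c3 p)"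
  by (rule Sop_eq, rule isS_smult, rule isS_Sop)

lemma Lop_add: "Lop c2 c3 a0 a1 a2 b0 b1 N (p + q) = Lop c2 c3 a0 a1 a2 b0 b1 N p + Lop c2 c3 a0 a1 a2 b0 b1 N q"
  unfolding Lop_def Dop_add Sop_add by (simp add: algebra_simps smult_add_right)
lemma Lop_smult: "Lop c2 c3 a0 a1 a2 b0 b1 N (smult c p) = smult c (Lop c2 c3 a0 a1 a2 b0 b1 N p)"
  unfolding Lop_def Dop_smult Sop_smult by (simp add: algebra_simps smult_add_right smult_diff_right)
lemma Lop_0: "Lop c2 c3 a0 a1 a2 b0 b1 N 0 = 0"
  using Lop_smult[of c2 c3 a0 a1 a2 b0 b1 N 0 0] by simp
lemma Lop_sum: "finite A \<Longrightarrow> Lop c2 c3 a0 a1 a2 b0 b1 N (\<Sum>i\<in>A. f i) = (\<Sum>i\<in>A. Lop c2 c3 a0 a1 a2 b0 b1 N (f i))"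
  by (induction A rule: finite_induct) (auto simp: Lop_0 Lop_add)
lemma Lop_shift: "Lop c2 c3 a0 a1 a2 b0 b1 N p = Lop c2 c3 a0 a1 a2 b0 b1 M p + smult (lam a0 b0 (int M) - lam a0 b0 (int N)) p"
  unfolding Lop_def by (simp add: algebra_simps smult_diff_left)

lemma tc_diff: "tc c2 c3 (p - q) k = tc c2 c3 p k - tc c2 c3 q k"
proof -
  have "p - q = p + smult (-1) q" by simp
  hence "tc c2 c3 (p - q) k = tc c2 c3 p k + tc c2 c3 (smult (-1) q) k" by (simp only: tc_add)
  thus ?thesis by (simp only: tc_smult) 
qed

lemma tc_inj: assumes "\<forall>k. tc c2 c3 p k = tc c2 c3 q k" shows "p = q"
proof -
  have z: "\<And>k. tc c2 c3 (p - q) k = 0" using assms by (simp only: tc_diff)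
  have "p - q = (\<Sum>k\<le>degree (p-q). smult (tc c2 c3 (p-q) k) (th c2 c3 k))" by (rule tc_expand)
  also have "\<dots> = 0" by (simp only: z smult_0_left sum.neutral_const)
  finally show ?thesis by simp
qed

lemma mulX: "pCons 0 (th c2 c3 m) = th c2 c3 (Suc m) + smult (fcoef c2 c3 (int m)) (th c2 c3 m)"
  by (simp add: th_Suc mult_pCons_right)
lemma mulB: "[:b1, b0:] * p = smult b1 p + smult b0 (pCons 0 p)"
  by simp
lemma mulA: "[:a2, a1, a0:] * p = smult a2 p + smult a1 (pCons 0 p) + smult a0 (pCons 0 (pCons 0 p))"
  by (simp add: algebra_simps)




lemma pC: "pCons 0 (p + smult c q) = pCons 0 p + smult c (pCons 0 q)" by simp

lemma XB: "[:b1, b0:] * th c2 c3 m = smult b0 (th c2 c3 (Suc m)) + smult (b1 + b0 * fcoef c2 c3 (int m)) (th c2 c3 m)"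
proof -
  have "[:b1, b0:] * th c2 c3 m = smult b1 (th c2 c3 m) + smult b0 (th c2 c3 (Suc m) + smult (fcoef c2 c3 (int m)) (th c2 c3 m))"
    by (simp only: mulB mulX)
  also have "\<dots> = smult b0 (th c2 c3 (Suc m)) + smult (b1 + b0 * fcoef c2 c3 (int m)) (th c2 c3 m)"
    by (rule tc_inj[of c2 c3]) (simp add: tc_add tc_smult tc_th algebra_simps)
  finally show ?thesis .
qed

lemma XA: "[:a2, a1, a0:] * th c2 c3 m = smult a0 (th c2 c3 (Suc (Suc m)))
   + smult (a1 + a0 * (fcoef c2 c3 (int m) + fcoef c2 c3 (int (Suc m)))) (th c2 c3 (Suc m))
   + smult (a2 + a1 * fcoef c2 c3 (int m) + a0 * (fcoef c2 c3 (int m))^2) (th c2 c3 m)"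
proof -
  note x1 = mulX[of c2 c3 m] and x2 = mulX[of c2 c3 "Suc m"]
  have x3: "pCons 0 (pCons 0 (th c2 c3 m)) = pCons 0 (th c2 c3 (Suc m)) + smult (fcoef c2 c3 (int m)) (pCons 0 (th c2 c3 m))"
    using pC[of "th c2 c3 (Suc m)" "fcoef c2 c3 (int m)" "th c2 c3 m"] x1 by metis
  have "[:a2, a1, a0:] * th c2 c3 m = smult a2 (th c2 c3 m)
     + smult a1 (th c2 c3 (Suc m) + smult (fcoef c2 c3 (int m)) (th c2 c3 m))
     + smult a0 ((th c2 c3 (Suc (Suc m)) + smult (fcoef c2 c3 (int (Suc m))) (th c2 c3 (Suc m)))
          + smult (fcoef c2 c3 (int m)) (th c2 c3 (Suc m) + smult (fcoef c2 c3 (int m)) (th c2 c3 m)))"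
    by (simp only: mulA x3) (simp only: x1 x2)
  also have "\<dots> = smult a0 (th c2 c3 (Suc (Suc m)))
   + smult (a1 + a0 * (fcoef c2 c3 (int m) + fcoef c2 c3 (int (Suc m)))) (th c2 c3 (Suc m))
   + smult (a2 + a1 * fcoef c2 c3 (int m) + a0 * (fcoef c2 c3 (int m))^2) (th c2 c3 m)"
    by (rule tc_inj[of c2 c3]) (simp add: tc_add tc_smult tc_th algebra_simps power2_eq_square)
  finally show ?thesis .
qed

lemma Dop_0: "Dop c2 c3 0 = 0" using Dop_smult[of c2 c3 0 0] by simp
lemma Sop_0: "Sop c2 c3 0 = 0" using Sop_smult[of c2 c3 0 0] by simp

lemma Dop_1: "Dop c2 c3 1 = 0" using Dop_th[of c2 c3 0] by simp
lemma Sop_1: "Sop c2 c3 1 = 1" using Sop_th[of c2 c3 0] by (simp add: gcoef_def)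

lemma Lth: "Lop c2 c3 a0 a1 a2 b0 b1 N (th c2 c3 j) =
    smult (lam a0 b0 (int j) - lam a0 b0 (int N)) (th c2 c3 j)
  + smult (k1 c2 c3 a0 a1 b0 b1 (int j)) (th c2 c3 (j - 1))
  + smult (k2 c2 c3 a0 a1 a2 b0 b1 (int j)) (th c2 c3 (j - 2))"
proof (cases j)
  case 0
  then show ?thesis
    by (simp add: Lop_def Dop_1 Dop_0 Sop_0 lam_def k1_def k2_def)
next
  case (Suc m)
  show ?thesis
  proof (cases m)
    case 0
    have "Lop c2 c3 a0 a1 a2 b0 b1 N (th c2 c3 j) = [:b1, b0:] * th c2 c3 0 - smult (lam a0 b0 (int N)) (th c2 c3 1)"
      by (simp add: Lop_def Dop_th Dop_0 Sop_th Suc 0 gcoef_def del: th_0)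
    also have "\<dots> = smult (lam a0 b0 (int j) - lam a0 b0 (int N)) (th c2 c3 j)
      + smult (k1 c2 c3 a0 a1 b0 b1 (int j)) (th c2 c3 (j - 1))
      + smult (k2 c2 c3 a0 a1 a2 b0 b1 (int j)) (th c2 c3 (j - 2))"
      unfolding XB
      apply (rule tc_inj[of c2 c3])
      apply (simp add: tc_add tc_smult tc_th tc_diff tc_0 Suc 0)
      apply (simp add: lam_def k1_def k2_def gcoef_def algebra_simps tc_0)
      done
    finally show ?thesis .
  next
    case (Suc m')
    have j: "j = Suc (Suc m')" using \<open>j = Suc m\<close> Suc by simp
    have "Lop c2 c3 a0 a1 a2 b0 b1 N (th c2 c3 j) =
        smult (real (Suc (Suc m')) * real (Suc m')) ([:a2, a1, a0:] * th c2 c3 m')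
      + smult (real (Suc (Suc m'))) ([:b1, b0:] * th c2 c3 (Suc m'))
      + smult (real (Suc (Suc m')) * gcoef (int (Suc m'))) ([:b1, b0:] * th c2 c3 m')
      - smult (lam a0 b0 (int N)) (th c2 c3 (Suc (Suc m')))"
      by (simp add: Lop_def Dop_th Dop_smult Sop_smult Sop_th j mult_smult_right distrib_left smult_add_right)
    also have "\<dots> = smult (lam a0 b0 (int j) - lam a0 b0 (int N)) (th c2 c3 j)
      + smult (k1 c2 c3 a0 a1 b0 b1 (int j)) (th c2 c3 (j - 1))
      + smult (k2 c2 c3 a0 a1 a2 b0 b1 (int j)) (th c2 c3 (j - 2))"
      unfolding XA XB
      apply (rule tc_inj[of c2 c3])
      apply (rule allI)
      subgoal for k
        apply (simp add: tc_add tc_smult tc_th tc_diff j)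
        apply (cases "k = m'"; cases "k = Suc m'"; cases "k = Suc (Suc m')")
        apply (simp_all add: lam_def k1_def k2_def gcoef_def fcoef_def)
        apply (simp_all add: power2_eq_square field_simps)
        done
      done
    finally show ?thesis .
  qed
qed




lemma k1_0: "k1 c2 c3 a0 a1 b0 b1 0 = 0" by (simp add: k1_def)
lemma k2_0: "k2 c2 c3 a0 a1 a2 b0 b1 0 = 0" by (simp add: k2_def)
lemma k2_1: "k2 c2 c3 a0 a1 a2 b0 b1 1 = 0" by (simp add: k2_def gcoef_def)

lemma tcL: "tc c2 c3 (Lop c2 c3 a0 a1 a2 b0 b1 N (th c2 c3 j)) m =
   (if m = j then lam a0 b0 (int j) - lam a0 b0 (int N) else 0)
 + (if Suc m = j then k1 c2 c3 a0 a1 b0 b1 (int j) else 0)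
 + (if Suc (Suc m) = j then k2 c2 c3 a0 a1 a2 b0 b1 (int j) else 0)"
proof -
  have e: "tc c2 c3 (Lop c2 c3 a0 a1 a2 b0 b1 N (th c2 c3 j)) m =
     (if m = j then lam a0 b0 (int j) - lam a0 b0 (int N) else 0)
   + (if m = j - 1 then k1 c2 c3 a0 a1 b0 b1 (int j) else 0)
   + (if m = j - 2 then k2 c2 c3 a0 a1 a2 b0 b1 (int j) else 0)"
    by (simp only: Lth tc_add tc_smult tc_th) simp
  show ?thesis
  proof (cases j)
    case 0 then show ?thesis using e by (simp add: k1_0 k2_0)
  next
    case (Suc i)
    show ?thesis
    proof (cases i)
      case 0 then show ?thesis using e Suc by (simp add: k2_1)
    next
      case (Suc i') then show ?thesis using e \<open>j = Suc i\<close> by auto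
    qed
  qed
qed

lemma xb: "[:-\<beta>, 1:] * th c2 c3 j = th c2 c3 (Suc j) + smult (fcoef c2 c3 (int j) - \<beta>) (th c2 c3 j)"
proof -
  have "[:-\<beta>, 1:] * th c2 c3 j = smult (-\<beta>) (th c2 c3 j) + pCons 0 (th c2 c3 j)" by simp
  also have "\<dots> = smult (-\<beta>) (th c2 c3 j) + (th c2 c3 (Suc j) + smult (fcoef c2 c3 (int j)) (th c2 c3 j))"
    by (simp only: mulX)
  also have "\<dots> = th c2 c3 (Suc j) + smult (fcoef c2 c3 (int j) - \<beta>) (th c2 c3 j)"
    by (rule tc_inj[of c2 c3]) (simp add: tc_add tc_smult tc_th tc_diff algebra_simps)
  finally show ?thesis .
qed

lemma tcW: "tc c2 c3 (Lop c2 c3 a0 a1 a2 b0 b1 N ([:-\<beta>, 1:] * th c2 c3 j)) m =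
   tc c2 c3 (Lop c2 c3 a0 a1 a2 b0 b1 N (th c2 c3 (Suc j))) m
   + (fcoef c2 c3 (int j) - \<beta>) * tc c2 c3 (Lop c2 c3 a0 a1 a2 b0 b1 N (th c2 c3 j)) m"
  by (simp only: xb Lop_add Lop_smult tc_add tc_smult)

lemma deg_Lth: "degree (Lop c2 c3 a0 a1 a2 b0 b1 N (th c2 c3 j)) \<le> j"
  unfolding Lth
  by (intro degree_add_le; rule order.trans[OF degree_smult_le]) auto

lemma deg_Lop: "degree (Lop c2 c3 a0 a1 a2 b0 b1 N p) \<le> degree p"
proof -
  have "Lop c2 c3 a0 a1 a2 b0 b1 N p = Lop c2 c3 a0 a1 a2 b0 b1 N (\<Sum>k\<le>degree p. smult (tc c2 c3 p k) (th c2 c3 k))"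
    using arg_cong[OF tc_expand[of p c2 c3], of "Lop c2 c3 a0 a1 a2 b0 b1 N"] .
  also have "\<dots> = (\<Sum>k\<le>degree p. smult (tc c2 c3 p k) (Lop c2 c3 a0 a1 a2 b0 b1 N (th c2 c3 k)))"
    by (simp only: Lop_sum[OF finite_atMost] Lop_smult)
  finally have e: "Lop c2 c3 a0 a1 a2 b0 b1 N p = (\<Sum>k\<le>degree p. smult (tc c2 c3 p k) (Lop c2 c3 a0 a1 a2 b0 b1 N (th c2 c3 k)))" .
  show ?thesis unfolding e
    by (rule degree_sum_le) (auto intro: order.trans[OF degree_smult_le] order.trans[OF deg_Lth])
qed

lemma deg_from_tc: assumes "\<forall>m>D. tc c2 c3 p m = 0" shows "degree p \<le> D"
proof (rule ccontr)
  assume "\<not> degree p \<le> D"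
  hence "degree p > D" by simp
  hence "lead_coeff p = 0" using assms coeff_top_tc[of p c2 c3] by simp
  hence "p = 0" by simp
  with \<open>degree p > D\<close> show False by simp
qed




theorem lemma4p2:
  fixes c2 c3 a0 a1 a2 b0 b1 :: real and P :: "nat \<Rightarrow> real poly"
  assumes P_monic: "\<And>n. lead_coeff (P n) = 1"
    and P_deg: "\<And>n. degree (P n) = n"
    and P_eig: "\<And>n. Lop c2 c3 a0 a1 a2 b0 b1 n (P n) = 0"
    and P_unique: "\<And>n q. lead_coeff q = 1 \<Longrightarrow> degree q = n \<Longrightarrow>
                      Lop c2 c3 a0 a1 a2 b0 b1 n q = 0 \<Longrightarrow> q = P n"
    and n_pos: "n \<ge> 1"
  shows "(\<exists>\<beta>. degree (Lop c2 c3 a0 a1 a2 b0 b1 (n + 1) ([:- \<beta>, 1:] * P n)) \<le> n - 1)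
    \<and> (\<forall>\<beta>. degree (Lop c2 c3 a0 a1 a2 b0 b1 (n + 1) ([:- \<beta>, 1:] * P n)) \<le> n - 1 \<longrightarrow>
         \<beta> = pc c2 c3 (P n) (int n - 1) + fcoef c2 c3 (int n)
               + k1 c2 c3 a0 a1 b0 b1 (int n + 1) / (lam a0 b0 (int n) - lam a0 b0 (int n + 1))
       \<and> pc c2 c3 (Lop c2 c3 a0 a1 a2 b0 b1 (n + 1) ([:- \<beta>, 1:] * P n)) (int n - 1)
           = k2 c2 c3 a0 a1 a2 b0 b1 (int n + 1)
             + (fcoef c2 c3 (int n) + pc c2 c3 (P n) (int n - 1) - \<beta>) * k1 c2 c3 a0 a1 b0 b1 (int n)
             + (pc c2 c3 (P n) (int n - 1) * fcoef c2 c3 (int n - 1) + pc c2 c3 (P n) (int n - 2)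
                 - \<beta> * pc c2 c3 (P n) (int n - 1))
               * (lam a0 b0 (int n - 1) - lam a0 b0 (int n + 1)))"
proof -
  let ?L = "Lop c2 c3 a0 a1 a2 b0 b1"
  have lamne: "lam a0 b0 (int n) \<noteq> lam a0 b0 (int n + 1)"
  proof
    assume eq: "lam a0 b0 (int n) = lam a0 b0 (int n + 1)"
    define q where "q = P n + P (Suc n)"
    have dq: "degree q = Suc n" unfolding q_def using P_deg by (simp add: degree_add_eq_right)
    have c0: "coeff (P n) (Suc n) = 0" using P_deg[of n] by (simp add: coeff_eq_0)
    have c1: "coeff (P (Suc n)) (Suc n) = 1" using P_deg[of "Suc n"] P_monic[of "Suc n"] by simp
    have lq: "lead_coeff q = 1" using dq c0 c1 unfolding q_def by simp
    have "?L (Suc n) q = ?L (Suc n) (P n) + ?L (Suc n) (P (Suc n))" unfolding q_def by (rule Lop_add)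
    also have "?L (Suc n) (P n) = ?L n (P n) + smult (lam a0 b0 (int n) - lam a0 b0 (int (Suc n))) (P n)"
      by (rule Lop_shift)
    also have "\<dots> = 0" using P_eig eq by (simp add: add.commute)
    finally have "?L (Suc n) q = 0" using P_eig by simp
    hence "q = P (Suc n)" using P_unique lq dq by blast
    hence "P n = 0" unfolding q_def by simp
    thus False using P_monic[of n] by simp
  qed
  obtain n0 where n0: "n = Suc n0" using n_pos by (cases n) auto
  define c where "c = tc c2 c3 (P n)"
  define p1 where "p1 = pc c2 c3 (P n) (int n - 1)"
  define p2 where "p2 = pc c2 c3 (P n) (int n - 2)"
  have p1c: "p1 = c n0" by (simp add: p1_def pc_def c_def n0)
  have cn: "c n = 1" using coeff_top_tc[of "P n" c2 c3] P_monic[of n] P_deg[of n] by (simp add: c_def)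
  have cz: "\<And>k. k > n \<Longrightarrow> c k = 0" unfolding c_def using tc_zero P_deg by metis
  define R where "R = P n - th c2 c3 n - smult p1 (th c2 c3 (n-1)) - smult p2 (th c2 c3 (n-2))"
  have tcR: "tc c2 c3 R k = 0" if "n \<le> k + 2" for k
  proof -
    have e: "tc c2 c3 R k = c k - (if k = n then 1 else 0) - p1 * (if k = n - 1 then 1 else 0)
       - p2 * (if k = n - 2 then 1 else 0)"
      by (simp only: R_def tc_diff tc_smult tc_th c_def)
    show ?thesis
    proof (cases n0)
      case 0
      have "p2 = 0" by (simp add: p2_def pc_def n0 0)
      moreover have "k = 0 \<or> k = 1 \<or> k > 1" by arith
      ultimately show ?thesis using e cn cz p1c n0 0 by auto
    next
      case (Suc n1)
      have "p2 = c n1" by (simp add: p2_def pc_def c_def n0 Suc)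
      moreover have "k = n1 \<or> k = Suc n1 \<or> k = Suc (Suc n1) \<or> k > Suc (Suc n1)" using that n0 Suc by arith
      ultimately show ?thesis using e cn cz p1c n0 Suc by auto
    qed
  qed
  have URz: "tc c2 c3 (?L (n+1) ([:-\<beta>, 1:] * R)) m = 0" if "n \<le> m + 1" for \<beta> m
  proof (cases "R = 0")
    case True then show ?thesis by (simp add: Lop_0 tc_0)
  next
    case False
    have "tc c2 c3 R (degree R) \<noteq> 0" using coeff_top_tc[of R c2 c3] False by (metis leading_coeff_0_iff)
    hence dR: "degree R + 2 < n" using tcR by (metis not_le)
    have "degree (?L (n+1) ([:-\<beta>, 1:] * R)) \<le> degree ([:-\<beta>, 1:] * R)" by (rule deg_Lop)
    also have "\<dots> \<le> degree [:-\<beta>, 1:] + degree R" by (rule degree_mult_le)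
    also have "\<dots> = 1 + degree R" by simp
    finally have "degree (?L (n+1) ([:-\<beta>, 1:] * R)) < m" using dR that by simp
    thus ?thesis by (rule tc_zero)
  qed
  have PE: "P n = R + th c2 c3 n + smult p1 (th c2 c3 (n-1)) + smult p2 (th c2 c3 (n-2))"
    by (simp add: R_def)
  have UE: "tc c2 c3 (?L (n+1) ([:-\<beta>, 1:] * P n)) m =
      tc c2 c3 (?L (n+1) ([:-\<beta>, 1:] * R)) m
    + tc c2 c3 (?L (n+1) ([:-\<beta>, 1:] * th c2 c3 n)) m
    + p1 * tc c2 c3 (?L (n+1) ([:-\<beta>, 1:] * th c2 c3 (n-1))) m
    + p2 * tc c2 c3 (?L (n+1) ([:-\<beta>, 1:] * th c2 c3 (n-2))) m" for \<beta> m
    by (simp only: PE distrib_left mult_smult_right Lop_add Lop_smult tc_add tc_smult)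
  have F1: "tc c2 c3 (?L (n+1) ([:-\<beta>, 1:] * P n)) n =
     k1 c2 c3 a0 a1 b0 b1 (int n + 1) + (p1 + fcoef c2 c3 (int n) - \<beta>) * (lam a0 b0 (int n) - lam a0 b0 (int n + 1))" for \<beta>
  proof -
    have u: "tc c2 c3 (?L (n+1) ([:-\<beta>, 1:] * R)) n = 0" by (rule URz) simp
    show ?thesis
    proof (cases n0)
      case 0
      have "p2 = 0" by (simp add: p2_def pc_def n0 0)
      then show ?thesis unfolding UE tcW tcL u by (simp add: n0 0 algebra_simps)
    next
      case (Suc n1)
      show ?thesis unfolding UE tcW tcL u by (simp add: n0 Suc algebra_simps)
    qed
  qed
  have F2: "tc c2 c3 (?L (n+1) ([:-\<beta>, 1:] * P n)) (n-1) =
     k2 c2 c3 a0 a1 a2 b0 b1 (int n + 1)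
             + (fcoef c2 c3 (int n) + p1 - \<beta>) * k1 c2 c3 a0 a1 b0 b1 (int n)
             + (p1 * fcoef c2 c3 (int n - 1) + p2 - \<beta> * p1)
               * (lam a0 b0 (int n - 1) - lam a0 b0 (int n + 1))" for \<beta>
  proof (cases n0)
    case 0
    have "p2 = 0" by (simp add: p2_def pc_def n0 0)
    have u: "tc c2 c3 (?L (n+1) ([:-\<beta>, 1:] * R)) (n-1) = 0" by (rule URz) (simp add: n0)
    show ?thesis unfolding UE tcW tcL u using \<open>p2 = 0\<close> by (simp add: n0 0 algebra_simps)
  next
    case (Suc n1)
    have u: "tc c2 c3 (?L (n+1) ([:-\<beta>, 1:] * R)) (n-1) = 0" by (rule URz) (simp add: n0)
    show ?thesis unfolding UE tcW tcL u by (simp add: n0 Suc algebra_simps)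
  qed
  have F3: "tc c2 c3 (?L (n+1) ([:-\<beta>, 1:] * P n)) (n+1) = 0" for \<beta>
  proof -
    have u: "tc c2 c3 (?L (n+1) ([:-\<beta>, 1:] * R)) (n+1) = 0" by (rule URz) simp
    show ?thesis
    proof (cases n0)
      case 0
      have "p2 = 0" by (simp add: p2_def pc_def n0 0)
      then show ?thesis unfolding UE tcW tcL u by (simp add: n0 0 algebra_simps)
    next
      case (Suc n1)
      show ?thesis unfolding UE tcW tcL u by (simp add: n0 Suc algebra_simps)
    qed
  qed
  have Ule: "degree (?L (n+1) ([:-\<beta>, 1:] * P n)) \<le> n + 1" for \<beta>
  proof -
    have "degree (?L (n+1) ([:-\<beta>, 1:] * P n)) \<le> degree ([:-\<beta>, 1:] * P n)" by (rule deg_Lop)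
    also have "\<dots> \<le> degree [:-\<beta>, 1:] + degree (P n)" by (rule degree_mult_le)
    finally show ?thesis using P_deg by simp
  qed
  define d where "d = lam a0 b0 (int n) - lam a0 b0 (int n + 1)"
  have dne: "d \<noteq> 0" using lamne by (simp add: d_def)
  define \<beta>0 where "\<beta>0 = p1 + fcoef c2 c3 (int n) + k1 c2 c3 a0 a1 b0 b1 (int n + 1) / d"
  have ex: "degree (?L (n+1) ([:-\<beta>0, 1:] * P n)) \<le> n - 1"
  proof (rule deg_from_tc, intro allI impI)
    fix m assume "m > n - 1"
    hence "m = n \<or> m > n" using n0 by arith
    thus "tc c2 c3 (?L (n+1) ([:-\<beta>0, 1:] * P n)) m = 0"
    proof
      assume "m = n"
      have e1: "tc c2 c3 (?L (n+1) ([:-\<beta>0, 1:] * P n)) n = k1 c2 c3 a0 a1 b0 b1 (int n + 1) + (p1 + fcoef c2 c3 (int n) - \<beta>0) * d"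
        unfolding d_def by (rule F1)
      have e2: "(p1 + fcoef c2 c3 (int n) - \<beta>0) * d = - k1 c2 c3 a0 a1 b0 b1 (int n + 1)"
        using dne by (simp add: \<beta>0_def field_simps)
      show ?thesis using \<open>m = n\<close> e1 e2 by simp
    next
      assume "m > n"
      show ?thesis
      proof (cases "m = n + 1")
        case True
        show ?thesis using F3 True by simp
      next
        case False
        with \<open>m > n\<close> have "m > n + 1" by simp
        thus ?thesis using Ule by (intro tc_zero) (meson le_less_trans)
      qed
    qed
  qed
  have main: "\<beta> = p1 + fcoef c2 c3 (int n) + k1 c2 c3 a0 a1 b0 b1 (int n + 1) / d
       \<and> pc c2 c3 (?L (n + 1) ([:- \<beta>, 1:] * P n)) (int n - 1)
           = k2 c2 c3 a0 a1 a2 b0 b1 (int n + 1)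
             + (fcoef c2 c3 (int n) + p1 - \<beta>) * k1 c2 c3 a0 a1 b0 b1 (int n)
             + (p1 * fcoef c2 c3 (int n - 1) + p2 - \<beta> * p1)
               * (lam a0 b0 (int n - 1) - lam a0 b0 (int n + 1))"
    if hd: "degree (?L (n+1) ([:-\<beta>, 1:] * P n)) \<le> n - 1" for \<beta>
  proof
    have "tc c2 c3 (?L (n+1) ([:-\<beta>, 1:] * P n)) n = 0" using hd n0 by (intro tc_zero) simp
    hence "k1 c2 c3 a0 a1 b0 b1 (int n + 1) + (p1 + fcoef c2 c3 (int n) - \<beta>) * d = 0"
      using F1[of \<beta>] by (simp add: d_def)
    thus "\<beta> = p1 + fcoef c2 c3 (int n) + k1 c2 c3 a0 a1 b0 b1 (int n + 1) / d"
      using dne by (simp add: field_simps)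
    have "pc c2 c3 (?L (n + 1) ([:- \<beta>, 1:] * P n)) (int n - 1) = tc c2 c3 (?L (n+1) ([:-\<beta>, 1:] * P n)) (n-1)"
      by (simp add: pc_def n0)
    thus "pc c2 c3 (?L (n + 1) ([:- \<beta>, 1:] * P n)) (int n - 1)
           = k2 c2 c3 a0 a1 a2 b0 b1 (int n + 1)
             + (fcoef c2 c3 (int n) + p1 - \<beta>) * k1 c2 c3 a0 a1 b0 b1 (int n)
             + (p1 * fcoef c2 c3 (int n - 1) + p2 - \<beta> * p1)
               * (lam a0 b0 (int n - 1) - lam a0 b0 (int n + 1))" using F2[of \<beta>] by simp
  qed
  show ?thesis
    unfolding p1_def[symmetric] p2_def[symmetric] d_def[symmetric]
    using ex main by blast
qed


end
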